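(* Let $a,b,d<0$ and $c>0$ be real numbers with $c\le c^-$, and let $\{W_n(z)\}_{n\ge0}$ be the normalised sequence defined below. Then for every $n\ge1$ the polynomial $W_n(z)$ is real-rooted, and \[ |R_n^{J_1}|=\lfloor (n-1)/2\rfloor,\qquad |R_n^{J_2\cup J_3}|=\lfloor n/2\rfloor,\qquad |R_n^{J_4}|=1 . \] Moreover, \[ |R_n^{J_3}|=\begin{cases}1,&\text{if }\Delta_\Delta>\Delta_g\text{ and }n\ge n^+,\\ 0,&\text{otherwise.}\end{cases} \]
   Context: Let $a,b,c,d\in\mathbb{R}$ with $ac\ne0$, and put $A(z)=az+b$, $B(z)=cz+d$. The normalised sequence $\{W_n(z)\}_{n\ge0}$ is defined by $W_0(z)=1$, $W_1(z)=z$ and $W_n(z)=A(z)W_{n-1}(z)+B(z)W_{n-2}(z)$ for $n\ge2$; $W_n$ has degree $n$ with leading coefficient $a^{n-1}$. Notation (for $a,b,d<0<c$): - $\Delta_\Delta=-a^2d+abc+c^2$ (which is $>0$), and $x_\Delta^\pm=\dfrac{-ab-2c\pm2\sqrt{\Delta_\Delta}}{a^2}$ are the zeros of $\Delta(z)=A(z)^2+4B(z)=a^2z^2+(2ab+4c)z+(b^2+4d)$. - $g(z)=(1-a)z^2-(b+c)z-d$, $\Delta_g=(b+c)^2+4d(1-a)$, and $x_g^\pm=\dfrac{b+c\pm\sqrt{\Delta_g}}{2(1-a)}$ are the zeros of $g$. - $c^\pm=\pm2\sqrt{d(a-1)}-b$; then $x_g^\pm$ are real iff $c\le c^-$ or $c\ge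 c^+$. - $x_A=-b/a$, $x_B=-d/c$, $h(z)=(2-a)z-b$, and $n^+=-A(x_\Delta^+)/h(x_\Delta^+)$ (defined whenever $h(x_\Delta^+)\ne0$, which is the case when $\Delta_\Delta\neq\Delta_g$). - $J_1=(x_\Delta^-,x_A)$, $J_2=(x_A,x_\Delta^+)$, $J_3=[x_\Delta^+,x_g^-)$, $J_4=(x_g^+,0]$. - $R_n$ denotes the multiset of zeros of $W_n(z)$ (with multiplicity), and for an interval $J$, $R_n^J=R_n\cap J$; $|\cdot|$ is cardinality counted with multiplicity. A polynomial is real-rooted if all its zeros are real. *)

theory Defs
  imports "HOL-Computational_Algebra.Polynomial" Complex_Main
begin

text \<open>The normalised sequence: W_0 = 1, W_1 = z, W_n = A W_{n-1} + B W_{n-2},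
  with A(z) = a z + b and B(z) = c z + d.\<close>
fun W :: "real \<Rightarrow> real \<Rightarrow> real \<Rightarrow> real \<Rightarrow> nat \<Rightarrow> real poly" where
  "W a b c d 0 = 1"
| "W a b c d (Suc 0) = [:0, 1:]"
| "W a b c d (Suc (Suc n)) = [:b, a:] * W a b c d (Suc n) + [:d, c:] * W a b c d n"

definition real_rooted :: "real poly \<Rightarrow> bool" where
  "real_rooted p \<longleftrightarrow> (\<forall>z::complex. poly (map_poly of_real p) z = 0 \<longrightarrow> z \<in> \<real>)"

definition nroots_in :: "real poly \<Rightarrow> real set \<Rightarrow> nat" where
  "nroots_in p J = (\<Sum>x\<in>{x\<in>J. poly p x = 0}. order x p)"

definition DeltaDelta :: "real \<Rightarrow> real \<Rightarrow> real \<Rightarrow> real \<Rightarrow> real" where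
  "DeltaDelta a b c d = - (a ^ 2) * d + a * b * c + c ^ 2"

definition xDelta_plus :: "real \<Rightarrow> real \<Rightarrow> real \<Rightarrow> real \<Rightarrow> real" where
  "xDelta_plus a b c d = (- a * b - 2 * c + 2 * sqrt (DeltaDelta a b c d)) / (a ^ 2)"

definition xDelta_minus :: "real \<Rightarrow> real \<Rightarrow> real \<Rightarrow> real \<Rightarrow> real" where
  "xDelta_minus a b c d = (- a * b - 2 * c - 2 * sqrt (DeltaDelta a b c d)) / (a ^ 2)"

definition Delta_g :: "real \<Rightarrow> real \<Rightarrow> real \<Rightarrow> real \<Rightarrow> real" where
  "Delta_g a b c d = (b + c)^2 + 4 * d * (1 - a)"

definition xg_plus :: "real \<Rightarrow> real \<Rightarrow> real \<Rightarrow> real \<Rightarrow> real" where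
  "xg_plus a b c d = (b + c + sqrt (Delta_g a b c d)) / (2 * (1 - a))"

definition xg_minus :: "real \<Rightarrow> real \<Rightarrow> real \<Rightarrow> real \<Rightarrow> real" where
  "xg_minus a b c d = (b + c - sqrt (Delta_g a b c d)) / (2 * (1 - a))"

definition c_minus :: "real \<Rightarrow> real \<Rightarrow> real \<Rightarrow> real" where
  "c_minus a b d = - 2 * sqrt (d * (a - 1)) - b"

definition x_A :: "real \<Rightarrow> real \<Rightarrow> real" where
  "x_A a b = - b / a"

definition n_plus :: "real \<Rightarrow> real \<Rightarrow> real \<Rightarrow> real \<Rightarrow> real" where
  "n_plus a b c d =
     (let x = xDelta_plus a b c d in - (a * x + b) / ((2 - a) * x - b))"

end

theory Submission
  imports Defs
begin


lemma map_poly_of_real_add: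
  "map_poly (of_real::real\<Rightarrow>complex) (p + q) = map_poly of_real p + map_poly of_real q"
  by (intro poly_eqI) (simp add: coeff_map_poly)

lemma poly_map_of_real_mult:
  "poly (map_poly (of_real::real\<Rightarrow>complex) (p * q)) z =
   poly (map_poly of_real p) z * poly (map_poly of_real q) z"
proof (induction p rule: pCons_induct)
  case 0 then show ?case by simp
next
  case (pCons a p)
  have "map_poly (of_real::real\<Rightarrow>complex) (pCons a p * q) =
        smult (of_real a) (map_poly of_real q) + pCons 0 (map_poly of_real (p*q))"
    by (simp add: map_poly_of_real_add map_poly_smult map_poly_pCons)
  then show ?case using pCons.IH by (simp add: map_poly_pCons algebra_simps)
qed

lemma poly_map_of_real_prod:
  "finite S \<Longrightarrow> poly (map_poly (of_real::real\<Rightarrow>complex) (\<Prod>s\<in>S. f s)) z =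
   (\<Prod>s\<in>S. poly (map_poly of_real (f s)) z)"
  by (induction S rule: finite_induct) (simp_all add: poly_map_of_real_mult)

lemma prod_linear_dvd:
  fixes p :: "real poly"
  assumes "finite S" "\<forall>x\<in>S. poly p x = 0"
  shows "(\<Prod>s\<in>S. [:-s, 1:]) dvd p"
  using assms
proof (induction S rule: finite_induct)
  case empty then show ?case by simp
next
  case (insert x S)
  then obtain k where k: "p = (\<Prod>s\<in>S. [:-s, 1:]) * k" by (auto elim: dvdE)
  have "poly (\<Prod>s\<in>S. [:-s, 1:]) x \<noteq> 0"
    using insert(1,2) by (simp add: poly_prod)
  moreover have "poly p x = 0" using insert by simp
  ultimately have "poly k x = 0" using k by simp
  then obtain k' where "k = [:-x,1:] * k'" by (auto simp: poly_eq_0_iff_dvd elim: dvdE)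
  moreover have "(\<Prod>s\<in>insert x S. [:-s, 1:]) = [:-x, 1:] * (\<Prod>s\<in>S. [:-s, 1:])"
    using insert(1,2) by (rule prod.insert)
  ultimately have "p = (\<Prod>s\<in>insert x S. [:-s, 1:]) * k'"
    using k by (metis mult.commute mult.left_commute)
  then show ?case by simp
qed

lemma degree_prod_linear:
  "finite S \<Longrightarrow> degree (\<Prod>s\<in>S. [:-s, 1::real:]) = card S"
proof (induction S rule: finite_induct)
  case empty then show ?case by simp
next
  case (insert x S)
  have "(\<Prod>s\<in>insert x S. [:-s, 1::real:]) = [:-x, 1:] * (\<Prod>s\<in>S. [:-s, 1:])"
    using insert(1,2) by (rule prod.insert)
  moreover have "degree ([:-x, 1::real:] * (\<Prod>s\<in>S. [:-s, 1:])) = degree [:-x, 1::real:] + degree (\<Prod>s\<in>S. [:-s, 1::real:])"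
    by (rule degree_mult_eq) (auto simp: insert(1))
  ultimately show ?case using insert by simp
qed

lemma distinct_roots_full:
  fixes p :: "real poly"
  assumes "p \<noteq> 0" "finite S" "card S = degree p" "\<forall>x\<in>S. poly p x = 0"
  shows "{x. poly p x = 0} = S" "\<forall>x\<in>S. order x p = 1" "real_rooted p"
proof -
  define q where "q = (\<Prod>s\<in>S. [:-s, 1::real:])"
  obtain k where k: "p = q * k" using prod_linear_dvd[OF assms(2,4)] q_def by (auto elim: dvdE)
  have q0: "q \<noteq> 0" unfolding q_def using assms(2) by simp
  have k0: "k \<noteq> 0" using k assms(1) by auto
  have "degree p = degree q + degree k" using k q0 k0 by (simp add: degree_mult_eq)
  then have "degree k = 0" using assms(2,3) degree_prod_linear q_def by simp
  then obtain c0 where c0: "k = [:c0:]" by (metis degree_eq_zeroE)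
  have c00: "c0 \<noteq> 0" using k0 c0 by simp
  have polyp: "poly p x = c0 * (\<Prod>s\<in>S. x - s)" for x
    using k c0 by (simp add: q_def poly_prod)
  show "{x. poly p x = 0} = S"
    using c00 assms(2) by (auto simp: polyp)
  show "\<forall>x\<in>S. order x p = 1"
  proof
    fix x assume xS: "x \<in> S"
    define r where "r = smult c0 (\<Prod>s\<in>S-{x}. [:-s, 1::real:])"
    have "q = [:-x,1:] * (\<Prod>s\<in>S-{x}. [:-s, 1::real:])"
      unfolding q_def by (rule prod.remove[OF assms(2) xS])
    then have "p = [:-x,1:] * ((\<Prod>s\<in>S-{x}. [:-s, 1::real:]) * [:c0:])"
      using k c0 by (simp only: mult.assoc)
    moreover have "(\<Prod>s\<in>S-{x}. [:-s, 1::real:]) * [:c0:] = r"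
      unfolding r_def by simp
    ultimately have pr: "p = [:-x,1:] * r" by (simp only:)
    have rx: "poly r x \<noteq> 0" using c00 assms(2) by (simp add: r_def poly_prod)
    have "[:-x,1:] ^ 1 dvd p" unfolding power_one_right pr by (rule dvd_triv_left)
    moreover have "\<not> [:-x,1:] ^ Suc 1 dvd p"
    proof
      assume "[:-x,1:] ^ Suc 1 dvd p"
      then obtain t where "p = [:-x,1:] ^ Suc 1 * t" by (rule dvdE)
      then have "[:-x,1:] * r = [:-x,1:] * ([:-x,1:] * t)" using pr
        by (simp only: power_Suc power_one_right mult.assoc)
      moreover have "[:-x,1::real:] \<noteq> 0" by simp
      ultimately have "r = [:-x,1:] * t" using mult_left_cancel by blast
      then have "poly r x = 0" by (simp only: poly_mult) simp
      then show False using rx by simp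
    qed
    ultimately show "order x p = 1" by (rule order_unique_lemma)
  qed
  show "real_rooted p"
    unfolding real_rooted_def
  proof (intro allI impI)
    fix z :: complex
    assume "poly (map_poly of_real p) z = 0"
    then have "poly (map_poly of_real (q * k)) z = 0" using k by (simp only:)
    then have "poly (map_poly of_real q) z * poly (map_poly of_real k) z = 0"
      by (simp only: poly_map_of_real_mult)
    then have "(\<Prod>s\<in>S. poly (map_poly of_real [:-s,1:]) z) * poly (map_poly of_real k) z = 0"
      unfolding q_def by (simp only: poly_map_of_real_prod[OF assms(2)])
    then have "\<exists>s\<in>S. z - of_real s = 0"
      using c00 c0 assms(2) by (simp add: map_poly_pCons)
    then show "z \<in> \<real>" by (auto simp: algebra_simps)
  qed
qed

lemma nroots_in_distinct:
  fixes p :: "real poly"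
  assumes "p \<noteq> 0" "finite S" "card S = degree p" "\<forall>x\<in>S. poly p x = 0"
  shows "nroots_in p J = card (S \<inter> J)"
proof -
  have e: "{x\<in>J. poly p x = 0} = S \<inter> J" using distinct_roots_full(1)[OF assms] by auto
  show ?thesis unfolding nroots_in_def e
    using distinct_roots_full(2)[OF assms] by simp
qed



lemma poly_W_SS: "poly (W a b c d (Suc (Suc n))) x =
   (a*x+b) * poly (W a b c d (Suc n)) x + (c*x+d) * poly (W a b c d n) x"
  by (simp add: algebra_simps)

lemma W_g_root:
  assumes "x^2 = (a*x+b)*x + (c*x+d)"
  shows "poly (W a b c d n) x = x^n"
proof (induction n rule: nat_less_induct)
  case (1 n)
  show ?case
  proof (cases n)
    case 0 then show ?thesis by simp
  next
    case (Suc m) note m = this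
    show ?thesis
    proof (cases m)
      case 0 then show ?thesis using m by simp
    next
      case (Suc k)
      have "poly (W a b c d n) x = (a*x+b) * x^(Suc k) + (c*x+d) * x^k"
        using 1 m Suc by (simp del: W.simps add: poly_W_SS)
      also have "\<dots> = x^k * ((a*x+b)*x + (c*x+d))" by (simp add: algebra_simps)
      also have "\<dots> = x^n" using assms m Suc by (simp add: power2_eq_square)
      finally show ?thesis .
    qed
  qed
qed

lemma W_zero_rec:
  "(-1)^(Suc (Suc n)+1) * poly (W a b c d (Suc (Suc n))) 0 =
    -b * ((-1)^(Suc n+1) * poly (W a b c d (Suc n)) 0) + d * ((-1)^(n+1) * poly (W a b c d n) 0)"
  by (simp add: algebra_simps)

lemma W_zero_aux:
  assumes "b < 0" "d < 0" "b^2 + 4*d \<ge> 0" "n \<ge> 1"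
  shows "(-1)^(Suc n+1) * poly (W a b c d (Suc n)) 0 \<ge> (-b/2) * ((-1)^(n+1) * poly (W a b c d n) 0)
     \<and> (-1)^(n+1) * poly (W a b c d n) 0 \<ge> 0"
  using assms(4)
proof (induction n rule: dec_induct)
  case base
  have "poly (W a b c d 2) 0 = d" by (simp add: numeral_2_eq_2)
  then show ?case using assms by (simp add: numeral_2_eq_2)
next
  case (step n)
  define Q where "Q k = (-1)^(k+1) * poly (W a b c d k) 0" for k
  have rec: "Q (Suc (Suc n)) = -b * Q (Suc n) + d * Q n"
    unfolding Q_def by (rule W_zero_rec)
  have h1: "Q (Suc n) \<ge> (-b/2) * Q n" "Q n \<ge> 0" using step.IH unfolding Q_def by auto
  have "-b/2 \<ge> 0" using assms(1) by simp
  from mult_nonneg_nonneg[OF this h1(2)] have "(-b/2) * Q n \<ge> 0" .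
  then have qs: "Q (Suc n) \<ge> 0" using h1(1) by linarith
  have "Q n \<le> Q (Suc n) / (-b/2)" using h1 assms(1) by (simp add: field_simps)
  from mult_left_mono_neg[OF this less_imp_le[OF assms(2)]]
  have "d * Q n \<ge> d * (Q (Suc n) / (-b/2))" .
  then have "Q (Suc (Suc n)) \<ge> Q (Suc n) * (-b + 2*d/(-b))" using rec
    by (simp add: algebra_simps)
  moreover have "-b + 2*d/(-b) \<ge> -b/2"
  proof -
    have "b^2 \<ge> -4*d" using assms(3) by simp
    then have "b*b/2 + 2*d \<ge> 0" by (simp add: power2_eq_square)
    moreover have "-b + 2*d/(-b) - (-b/2) = (b*b/2 + 2*d) / (-b)" using assms(1) by (simp add: field_simps)
    ultimately show ?thesis using assms(1) by (smt (verit) divide_nonneg_pos)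
  qed
  ultimately have "Q (Suc (Suc n)) \<ge> (-b/2) * Q (Suc n)"
    using qs by (smt (verit) mult_left_mono mult.commute)
  then show ?case using qs unfolding Q_def by simp
qed

lemma W_zero_sign:
  assumes "b < 0" "d < 0" "b^2 + 4*d \<ge> 0" "n \<ge> 2"
  shows "(-1)^(n+1) * poly (W a b c d n) 0 > 0"
  using assms(4)
proof (induction n rule: dec_induct)
  case base then show ?case using assms by (simp add: numeral_2_eq_2)
next
  case (step n)
  have "(-1)^(n+2) * poly (W a b c d (Suc n)) 0 \<ge> (-b/2) * ((-1)^(n+1) * poly (W a b c d n) 0)"
    using W_zero_aux[OF assms(1,2,3), of n] step by auto
  moreover have "(-b/2) * ((-1)^(n+1) * poly (W a b c d n) 0) > 0"
  proof -
    have X: "0 < (-1)^(n+1) * poly (W a b c d n) 0" by (fact step.IH)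
    have "0 < -b/2" using assms(1) by simp
    from mult_pos_pos[OF this X] show ?thesis .
  qed
  ultimately show ?case by simp
qed

lemma W_trig:
  assumes "\<rho> > 0" "\<rho>^2 = -(c*x+d)" "a*x+b = 2*\<rho>*cos t"
  shows "\<rho> * sin t * poly (W a b c d n) x =
     \<rho>^(n+1) * sin ((n+1)*t) + (x - (a*x+b)) * \<rho>^n * sin (n*t)"
proof (induction n rule: nat_less_induct)
  case (1 n)
  show ?case
  proof (cases n)
    case 0 then show ?thesis by simp
  next
    case (Suc m) note m = this
    show ?thesis
    proof (cases m)
      case 0
      have "sin (2*t) = 2 * sin t * cos t" by (rule sin_double)
      then show ?thesis using m 0 assms by (simp add: algebra_simps power2_eq_square)
    next
      case (Suc k)
      have IH1: "\<rho> * sin t * poly (W a b c d (Suc k)) x =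
         \<rho>^(k+2) * sin ((k+2)*t) + (x - (a*x+b)) * \<rho>^(k+1) * sin ((k+1)*t)"
        using 1 m Suc by (auto simp: add_ac)
      have IH0: "\<rho> * sin t * poly (W a b c d k) x =
         \<rho>^(k+1) * sin ((k+1)*t) + (x - (a*x+b)) * \<rho>^k * sin (k*t)"
        using 1 m Suc by (auto simp: add_ac)
      have id: "2 * cos t * sin (j*t + t) = sin (j*t + 2*t) + sin (j*t)" for j :: real
      proof -
        have e1: "j*t + 2*t = (j*t+t) + t" by simp
        have e2: "j*t = (j*t+t) - t" by simp
        have "sin (j*t + 2*t) + sin (j*t) = sin ((j*t+t) + t) + sin ((j*t+t) - t)"
          using e1 e2 by metis
        also have "\<dots> = 2 * cos t * sin (j*t + t)" by (simp only: sin_add sin_diff) simp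
        finally show ?thesis by simp
      qed
      have n2: "n = k + 2" using m Suc by simp
      have B: "c*x+d = - (\<rho>^2)" using assms(2) by simp
      have "\<rho> * sin t * poly (W a b c d n) x =
         (a*x+b) * (\<rho> * sin t * poly (W a b c d (Suc k)) x) + (c*x+d) * (\<rho> * sin t * poly (W a b c d k) x)"
        using n2 by (simp add: algebra_simps)
      also have "\<dots> = 2*\<rho>*cos t * (\<rho>^(k+2) * sin ((k+2)*t) + (x - (a*x+b)) * \<rho>^(k+1) * sin ((k+1)*t))
           - \<rho>^2 * (\<rho>^(k+1) * sin ((k+1)*t) + (x - (a*x+b)) * \<rho>^k * sin (k*t))"
        unfolding IH1 IH0 using assms(3) B by (simp only:)
      also have "\<dots> = \<rho>^(k+3) * (2 * cos t * sin ((k+1)*t + t) - sin ((k+1)*t))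
           + (x - (a*x+b)) * \<rho>^(k+2) * (2 * cos t * sin (k*t + t) - sin (k*t))"
        by (simp add: algebra_simps power2_eq_square power_add power3_eq_cube)
      also have "\<dots> = \<rho>^(k+3) * sin ((k+3)*t) + (x - (a*x+b)) * \<rho>^(k+2) * sin ((k+2)*t)"
        unfolding id by (simp add: algebra_simps)
      finally show ?thesis using n2 by (simp add: add_ac power_add power3_eq_cube)
    qed
  qed
qed

lemma W_double:
  assumes "a*x+b = 2*u" "c*x+d = - (u^2)"
  shows "2*u * poly (W a b c d n) x = u^n * (2*u + n*(2*x - 2*u))"
proof (induction n rule: nat_less_induct)
  case (1 n)
  show ?case
  proof (cases n)
    case 0 then show ?thesis by simp
  next
    case (Suc m) note m = this
    show ?thesis
    proof (cases m)
      case 0 then show ?thesis using m by (simp add: algebra_simps)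
    next
      case (Suc k)
      have IH1: "2*u * poly (W a b c d (Suc k)) x = u^(Suc k) * (2*u + (k+1)*(2*x - 2*u))"
        using 1 m Suc by auto
      have IH0: "2*u * poly (W a b c d k) x = u^k * (2*u + k*(2*x - 2*u))"
        using 1 m Suc by auto
      have "2*u * poly (W a b c d n) x =
         (a*x+b) * (2*u * poly (W a b c d (Suc k)) x) + (c*x+d) * (2*u * poly (W a b c d k) x)"
        using m Suc by (simp add: algebra_simps)
      also have "\<dots> = u^n * (2*u + n*(2*x - 2*u))"
        unfolding IH1 IH0 assms using m Suc by (simp add: algebra_simps power2_eq_square)
      finally show ?thesis .
    qed
  qed
qed

lemma W_degree:
  assumes "a \<noteq> 0"
  shows "degree (W a b c d n) = n \<and> coeff (W a b c d n) n = a^(n-1) \<and> W a b c d n \<noteq> 0"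
proof (induction n rule: nat_less_induct)
  case (1 n)
  show ?case
  proof (cases n)
    case 0 then show ?thesis by simp
  next
    case (Suc m) note m = this
    show ?thesis
    proof (cases m)
      case 0 then show ?thesis using m by simp
    next
      case (Suc k)
      have I1: "degree (W a b c d (Suc k)) = Suc k" "coeff (W a b c d (Suc k)) (Suc k) = a^k"
        using 1 m Suc by auto
      have I0: "degree (W a b c d k) = k" using 1 m Suc by auto
      have d1: "degree ([:b, a:] * W a b c d (Suc k)) = Suc (Suc k)"
        using I1 assms 1 m Suc by (subst degree_mult_eq) auto
      have d2: "degree ([:d, c:] * W a b c d k) < Suc (Suc k)"
      proof -
        have dd: "degree ([:d,c:]::real poly) \<le> 1" using degree_pCons_le[of d "[:c:]"] by simp
        have "degree ([:d, c:] * W a b c d k) \<le> degree [:d,c:] + degree (W a b c d k)"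
          by (rule degree_mult_le)
        then show ?thesis using dd I0 by linarith
      qed
      have deg: "degree (W a b c d n) = n"
        using m Suc d1 d2 by (simp only: W.simps degree_add_eq_left)
      have "coeff ([:d, c:] * W a b c d k) (Suc (Suc k)) = 0"
        using d2 by (rule coeff_eq_0)
      moreover have "coeff ([:b, a:] * W a b c d (Suc k)) (Suc (Suc k)) = a * a^k"
        using I1 d1 coeff_mult_degree_sum[of "[:b,a:]" "W a b c d (Suc k)"] assms by simp
      ultimately have "coeff (W a b c d n) n = a^(n-1)" using m Suc by simp
      then show ?thesis using deg assms by (auto simp: m Suc)
    qed
  qed
qed



locale setting =
  fixes a b c d :: real
  assumes a: "a < 0" and b: "b < 0" and d: "d < 0" and c: "0 < c"
    and cm: "c \<le> c_minus a b d"
begin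

definition "s = sqrt (DeltaDelta a b c d)"
definition "tg = sqrt (Delta_g a b c d)"
definition "xm = xDelta_minus a b c d"
definition "xp = xDelta_plus a b c d"
definition "gm = xg_minus a b c d"
definition "gp = xg_plus a b c d"
definition "xA = x_A a b"

lemma DD_pos: "DeltaDelta a b c d > 0"
proof -
  have "a^2 > 0" using a by simp
  then have "- (a^2) * d > 0" using d by (simp add: mult_pos_neg)
  moreover have "a*b*c > 0" using a b c by (simp add: mult_pos_pos mult_neg_neg)
  ultimately show ?thesis unfolding DeltaDelta_def by (smt (verit) zero_le_power2)
qed

lemma s_pos: "s > 0" and s_sq: "s^2 = DeltaDelta a b c d"
  using DD_pos unfolding s_def by auto

lemma ss: "s*s = - (a^2) * d + a * b * c + c ^ 2"
  using s_sq unfolding DeltaDelta_def by (simp add: power2_eq_square)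

lemma s_gt_c: "s > c"
proof -
  have "a^2 > 0" using a by simp
  then have "- (a^2) * d > 0" using d by (simp add: mult_pos_neg)
  moreover have "a*b*c > 0" using a b c by (simp add: mult_pos_pos mult_neg_neg)
  ultimately have "s^2 > c^2" using s_sq unfolding DeltaDelta_def by simp
  then show ?thesis using s_pos c by (smt (verit) power_mono)
qed

lemma sq_pos: "sqrt (d*(a-1)) > 0"
  using a d by (simp add: mult_neg_neg)

lemma bc_le: "b + c \<le> - 2 * sqrt (d*(a-1))"
  using cm unfolding c_minus_def by simp

lemma bc_neg: "b + c < 0" using bc_le sq_pos by linarith

lemma b_sq: "b^2 > 4 * (d*(a-1))"
proof -
  have "-b > 2 * sqrt (d*(a-1))" using bc_le c by simp
  moreover have "2 * sqrt (d*(a-1)) \<ge> 0" using sq_pos by simp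
  ultimately have "(-b)^2 > (2 * sqrt (d*(a-1)))^2"
    by (smt (verit) power_strict_mono zero_less_numeral pos2)
  then show ?thesis using sq_pos by (simp add: power_mult_distrib)
qed

lemma b_sq_4d: "b^2 + 4*d > 0"
proof -
  have "4*(d*(a-1)) + 4*d = 4*(d*a)" by (simp add: algebra_simps)
  moreover have "d*a > 0" using a d by (simp add: mult_neg_neg)
  ultimately show ?thesis using b_sq by linarith
qed

lemma Dg_nonneg: "Delta_g a b c d \<ge> 0"
proof -
  have "-(b+c) \<ge> 2 * sqrt (d*(a-1))" using bc_le by simp
  then have "(-(b+c))^2 \<ge> (2 * sqrt (d*(a-1)))^2"
    using sq_pos by (intro power_mono) auto
  then have "(b+c)^2 \<ge> 4*(d*(a-1))" using sq_pos by (simp add: power_mult_distrib power2_eq_square algebra_simps)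
  then show ?thesis unfolding Delta_g_def by (simp add: algebra_simps)
qed

lemma tg_nonneg: "tg \<ge> 0" and tg_sq: "tg^2 = Delta_g a b c d"
  using Dg_nonneg unfolding tg_def by auto

lemma A_xp: "a*xp+b = 2*(s-c)/a"
  using a unfolding xp_def xDelta_plus_def s_def[symmetric] by (simp add: field_simps power2_eq_square)

lemma A_xm: "a*xm+b = -2*(s+c)/a"
  using a unfolding xm_def xDelta_minus_def s_def[symmetric] by (simp add: field_simps power2_eq_square)

lemma A_xp_neg: "a*xp+b < 0"
  using A_xp s_gt_c a by (simp add: divide_pos_neg)

lemma A_xm_pos: "a*xm+b > 0"
proof -
  have "-2*(s+c) < 0" using s_pos c by simp
  then show ?thesis using A_xm a by (simp add: divide_neg_neg)
qed

lemma Delta_xp: "(a*xp+b)^2 + 4*(c*xp+d) = 0"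
proof -
  have xpe: "xp = (-a*b - 2*c + 2*s)/a^2" unfolding xp_def xDelta_plus_def s_def by simp
  have "c*xp + d = (c*(-a*b - 2*c + 2*s) + d*a^2)/a^2" unfolding xpe using a by (simp add: field_simps)
  moreover have "(a*xp+b)^2 = 4*(s-c)^2/a^2" unfolding A_xp by (simp add: power_divide power2_eq_square algebra_simps)
  ultimately have "(a*xp+b)^2 + 4*(c*xp+d) = (4*(s-c)^2 + 4*(c*(-a*b - 2*c + 2*s) + d*a^2))/a^2"
    by (simp add: add_divide_distrib)
  also have "4*(s-c)^2 + 4*(c*(-a*b - 2*c + 2*s) + d*a^2) = 4*(s^2 - DeltaDelta a b c d)"
    unfolding DeltaDelta_def by (simp add: algebra_simps power2_eq_square)
  finally show ?thesis using s_sq by simp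
qed

lemma Delta_xm: "(a*xm+b)^2 + 4*(c*xm+d) = 0"
proof -
  have xme: "xm = (-a*b - 2*c - 2*s)/a^2" unfolding xm_def xDelta_minus_def s_def by simp
  have "c*xm + d = (c*(-a*b - 2*c - 2*s) + d*a^2)/a^2" unfolding xme using a by (simp add: field_simps)
  moreover have "(a*xm+b)^2 = 4*(s+c)^2/a^2" unfolding A_xm by (simp add: power_divide power2_eq_square algebra_simps)
  ultimately have "(a*xm+b)^2 + 4*(c*xm+d) = (4*(s+c)^2 + 4*(c*(-a*b - 2*c - 2*s) + d*a^2))/a^2"
    by (simp add: add_divide_distrib)
  also have "4*(s+c)^2 + 4*(c*(-a*b - 2*c - 2*s) + d*a^2) = 4*(s^2 - DeltaDelta a b c d)"
    unfolding DeltaDelta_def by (simp add: algebra_simps power2_eq_square)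
  finally show ?thesis using s_sq by simp
qed

lemma xA_eq: "a*xA+b = 0" using a unfolding xA_def x_A_def by simp

lemma order_xs: "xm < xA" "xA < xp"
proof -
  have "a*xm+b > a*xA+b" using A_xm_pos xA_eq by simp
  then show "xm < xA" using a by (smt (verit) mult_less_cancel_left)
  have "a*xA+b > a*xp+b" using A_xp_neg xA_eq by simp
  then show "xA < xp" using a by (smt (verit) mult_less_cancel_left)
qed

lemma B_neg: "x \<le> xp \<Longrightarrow> c*x+d < 0"
proof -
  assume "x \<le> xp"
  then have "c*x+d \<le> c*xp+d" using c by simp
  moreover have "(a*xp+b)^2 + 4*(c*xp+d) = 0" by (rule Delta_xp)
  moreover have "(a*xp+b)^2 > 0" using A_xp_neg by simp
  ultimately show ?thesis by (smt (verit))
qed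

lemma sqrt_B_xp: "sqrt (-(c*xp+d)) = -(a*xp+b)/2"
proof -
  have "(a*xp+b)^2 = -4*(c*xp+d)" using Delta_xp by linarith
  then have "-(c*xp+d) = (- (a*xp+b)/2)^2" by (simp add: power_divide power2_eq_square algebra_simps)
  then show ?thesis using A_xp_neg by simp
qed

lemma sqrt_B_xm: "sqrt (-(c*xm+d)) = (a*xm+b)/2"
proof -
  have "(a*xm+b)^2 = -4*(c*xm+d)" using Delta_xm by linarith
  then have "-(c*xm+d) = ((a*xm+b)/2)^2" by (simp add: power_divide power2_eq_square algebra_simps)
  then show ?thesis using A_xm_pos by simp
qed

lemma Delta_fact: "(a*x+b)^2 + 4*(c*x+d) = a^2 * (x - xm) * (x - xp)"
proof -
  have xme: "xm = (-a*b - 2*c - 2*s)/a^2" unfolding xm_def xDelta_minus_def s_def by simp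
  have xpe: "xp = (-a*b - 2*c + 2*s)/a^2" unfolding xp_def xDelta_plus_def s_def by simp
  have "a^2 * (x - xm) * (x - xp) = ((a^2*x + a*b + 2*c)^2 - 4*(s*s))/a^2"
    unfolding xme xpe using a by (simp add: field_simps power2_eq_square)
  also have "\<dots> = (a*x+b)^2 + 4*(c*x+d)"
    using a unfolding ss by (simp add: field_simps power2_eq_square)
  finally show ?thesis by simp
qed

definition "G x = x^2 - (a*x+b)*x - (c*x+d)"

lemma G_pos: "xm < x \<Longrightarrow> x < xp \<Longrightarrow> G x > 0"
proof -
  assume "xm < x" "x < xp"
  then have "(a*x+b)^2 + 4*(c*x+d) < 0"
    unfolding Delta_fact using a by (simp add: mult_pos_neg)
  moreover have "4 * G x = (2*x - (a*x+b))^2 - ((a*x+b)^2 + 4*(c*x+d))"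
    unfolding G_def by (simp add: algebra_simps power2_eq_square)
  ultimately show "G x > 0" by (smt (verit) zero_le_power2)
qed

lemma G_fact: "G x = (1-a) * (x - gm) * (x - gp)"
proof -
  have gme: "gm = (b + c - tg)/(2*(1-a))" unfolding gm_def xg_minus_def tg_def by simp
  have gpe: "gp = (b + c + tg)/(2*(1-a))" unfolding gp_def xg_plus_def tg_def by simp
  have "gm + gp = ((b+c-tg) + (b+c+tg))/(2*(1-a))" unfolding gme gpe by (rule add_divide_distrib[symmetric])
  also have "\<dots> = (b+c)/(1-a)" using a by (auto simp: field_simps)
  finally have sum: "gm + gp = (b+c)/(1-a)" .
  have "gm * gp = ((b+c)^2 - tg^2)/(4*(1-a)^2)" unfolding gme gpe using a
    by (simp add: field_simps power2_eq_square)
  also have "\<dots> = (-d * (4*(1-a)))/((1-a)*(4*(1-a)))"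
    unfolding tg_sq Delta_g_def by (simp add: power2_eq_square algebra_simps)
  also have "\<dots> = -d/(1-a)"
    using a by (intro nonzero_mult_divide_mult_cancel_right) simp
  finally have prod: "gm * gp = -d/(1-a)" .
  have "(1-a) * (x - gm) * (x - gp) = (1-a)*x^2 - (1-a)*(gm+gp)*x + (1-a)*(gm*gp)"
    by (simp add: algebra_simps power2_eq_square)
  also have "\<dots> = (1-a)*x^2 - (b+c)*x - d" unfolding sum prod using a by simp
  also have "\<dots> = G x" unfolding G_def by (simp add: algebra_simps power2_eq_square)
  finally show ?thesis by simp
qed

lemma gm_le_gp: "gm \<le> gp"
  using tg_nonneg a unfolding gm_def gp_def xg_minus_def xg_plus_def tg_def[symmetric]
  by (simp add: divide_right_mono)

lemma gp_neg: "gp < 0"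
proof -
  have "tg^2 < (b+c)^2" using tg_sq d a unfolding Delta_g_def by (simp add: mult_neg_pos)
  then have "tg^2 < (-(b+c))^2" by (simp only: power2_minus)
  from power_less_imp_less_base[OF this] have "tg < -(b+c)" using bc_neg by simp
  then have "b+c+tg < 0" by simp
  then show ?thesis using a unfolding gp_def xg_plus_def tg_def[symmetric] by (simp add: divide_neg_pos)
qed

lemma G_gm: "gm^2 = (a*gm+b)*gm + (c*gm+d)"
  using G_fact[of gm] unfolding G_def by simp
lemma G_gp: "gp^2 = (a*gp+b)*gp + (c*gp+d)"
  using G_fact[of gp] unfolding G_def by simp

lemma xA_lt_v: "xA < (b+c)/(2*(1-a))"
proof -
  have "a*c + b*(2-a) < 0" using a b c by (smt (verit) mult_neg_pos mult_pos_neg mult_neg_neg)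
  then have "-b/a < (b+c)/(2*(1-a))" using a by (simp add: field_simps)
  then show ?thesis unfolding xA_def x_A_def by simp
qed

lemma v_le_gp: "(b+c)/(2*(1-a)) \<le> gp"
  using tg_nonneg a unfolding gp_def xg_plus_def tg_def[symmetric]
  by (simp add: divide_right_mono)

lemma xp_le_gm: "xp \<le> gm"
proof (rule ccontr)
  assume "\<not> xp \<le> gm"
  then have gx: "gm < xp" by simp
  have "G gm = 0" "G gp = 0" using G_fact by simp_all
  show False
  proof (cases "xm < gm")
    case True then show False using G_pos[of gm] gx \<open>G gm = 0\<close> by simp
  next
    case False
    have gpA: "gp > xA" using xA_lt_v v_le_gp by simp
    show False
    proof (cases "gp < xp")
      case True then show False using G_pos[of gp] gpA order_xs \<open>G gp = 0\<close> by simp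
    next
      case False2: False
      have "G xA \<le> 0" unfolding G_fact using a gpA False order_xs
        by (smt (verit) mult_nonneg_nonpos mult_pos_pos)
      moreover have "G xA > 0" using G_pos order_xs by simp
      ultimately show False by simp
    qed
  qed
qed

lemma xp_neg: "xp < 0" using xp_le_gm gm_le_gp gp_neg by simp

lemma h_pos_iff: "(2-a)*xp - b > 0 \<longleftrightarrow> DeltaDelta a b c d > Delta_g a b c d"
proof -
  define K where "K = a*b + (2-a)*c"
  have Kp: "K > 0" unfolding K_def using a b c by (smt (verit) mult_neg_neg mult_pos_pos)
  have xpe: "xp = (-a*b - 2*c + 2*s)/a^2" unfolding xp_def xDelta_plus_def s_def by simp
  have h: "(2-a)*xp - b = 2*((2-a)*s - K)/a^2"
    unfolding xpe K_def using a by (simp add: field_simps power2_eq_square)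
  have id: "((2-a)*s)^2 - K^2 = a^2 * (DeltaDelta a b c d - Delta_g a b c d)"
    unfolding K_def power_mult_distrib s_sq DeltaDelta_def Delta_g_def by (simp add: algebra_simps power2_eq_square)
  have a2: "a^2 > 0" using a by simp
  have "(2-a)*xp - b > 0 \<longleftrightarrow> (2-a)*s > K" unfolding h using a2 by (simp add: divide_pos_pos zero_less_divide_iff)
  also have "\<dots> \<longleftrightarrow> ((2-a)*s)^2 > K^2"
  proof
    assume "(2-a)*s > K" then show "((2-a)*s)^2 > K^2" using Kp by (intro power_strict_mono) auto
  next
    assume "((2-a)*s)^2 > K^2" then show "(2-a)*s > K" using Kp s_pos a
      by (smt (verit) power_mono mult_pos_pos)
  qed
  also have "\<dots> \<longleftrightarrow> DeltaDelta a b c d > Delta_g a b c d" using id a2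
    by (smt (verit) mult_pos_pos mult_le_0_iff zero_less_mult_iff)
  finally show ?thesis .
qed

end


lemma seq_pts:
  fixes F :: "nat \<Rightarrow> real \<Rightarrow> real" and L R :: real
  assumes LR: "L < R"
    and cont: "\<And>k. k < M \<Longrightarrow> continuous_on {L..R} (F k)"
    and pos: "\<And>k. k < M \<Longrightarrow> F k L > 0"
    and neg: "\<And>k. k < M \<Longrightarrow> F k R < 0"
    and step: "\<And>k x. Suc k < M \<Longrightarrow> L \<le> x \<Longrightarrow> x \<le> R \<Longrightarrow> F k x = 0 \<Longrightarrow> F (Suc k) x > 0"
  shows "m \<le> M \<Longrightarrow> \<exists>p. \<forall>k<m. L < p k \<and> p k < R \<and> F k (p k) = 0 \<and> (Suc k < m \<longrightarrow> p k < p (Suc k))"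
proof (induction m)
  case 0 then show ?case by simp
next
  case (Suc m)
  then obtain p where p: "\<forall>k<m. L < p k \<and> p k < R \<and> F k (p k) = 0 \<and> (Suc k < m \<longrightarrow> p k < p (Suc k))"
    by auto
  define lo where "lo = (if m = 0 then L else p (m-1))"
  have lo1: "L \<le> lo \<and> lo < R"
  proof (cases "m = 0")
    case True then show ?thesis using LR unfolding lo_def by simp
  next
    case False
    then have "m - 1 < m" by simp
    then have "L < p (m-1)" "p (m-1) < R" using p by blast+
    then show ?thesis using False unfolding lo_def by simp
  qed
  have flo: "F m lo > 0"
  proof (cases "m = 0")
    case True then show ?thesis using pos Suc.prems unfolding lo_def by simp
  next
    case False
    then have mm: "m-1 < m" by simp
    have "L < p (m-1)" "p (m-1) < R" "F (m-1) (p (m-1)) = 0" using p mm by blast+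
    then have "Suc (m-1) < M" "L \<le> p (m-1)" "p (m-1) \<le> R" "F (m-1) (p (m-1)) = 0"
      using Suc.prems False by auto
    from step[OF this] show ?thesis using False unfolding lo_def by simp
  qed
  have fR: "F m R < 0" using neg Suc.prems by simp
  have ct: "continuous_on {lo..R} (F m)"
    using cont[of m] Suc.prems lo1 by (auto intro: continuous_on_subset)
  obtain y where y: "lo \<le> y" "y \<le> R" "F m y = 0"
    using IVT2'[of "F m" R 0 lo, OF _ _ _ ct] fR flo lo1 by auto
  have yl: "lo < y" using y flo by (cases "y = lo") auto
  have yr: "y < R" using y fR by (cases "y = R") auto
  define p' where "p' = p(m := y)"
  have "\<forall>k<Suc m. L < p' k \<and> p' k < R \<and> F k (p' k) = 0 \<and> (Suc k < Suc m \<longrightarrow> p' k < p' (Suc k))"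
  proof (intro allI impI)
    fix k assume k: "k < Suc m"
    show "L < p' k \<and> p' k < R \<and> F k (p' k) = 0 \<and> (Suc k < Suc m \<longrightarrow> p' k < p' (Suc k))"
    proof (cases "k = m")
      case True then show ?thesis using y yl yr lo1 unfolding p'_def by auto
    next
      case False
      then have km: "k < m" using k by simp
      have "Suc k < Suc m \<longrightarrow> p' k < p' (Suc k)"
      proof
        assume "Suc k < Suc m"
        show "p' k < p' (Suc k)"
        proof (cases "Suc k = m")
          case True
          then have "p' (Suc k) = y" "p' k = p k" "lo = p k" unfolding p'_def lo_def by auto
          then show ?thesis using yl by simp
        next
          case False then show ?thesis using p km \<open>Suc k < Suc m\<close> unfolding p'_def by auto
        qed
      qed
      then show ?thesis using p km unfolding p'_def by auto
    qed
  qed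
  then show ?case by blast
qed

lemma sign_change_root:
  fixes f :: "real \<Rightarrow> real"
  assumes "l < h" "continuous_on {l..h} f" "f l * f h < 0"
  shows "\<exists>x. l < x \<and> x < h \<and> f x = 0"
proof (cases "f l < 0")
  case True
  then have "f h > 0" using assms(3) by (simp add: mult_less_0_iff)
  then obtain x where "l \<le> x" "x \<le> h" "f x = 0" using IVT'[of f l 0 h] True assms by auto
  then show ?thesis using True \<open>f h > 0\<close> by (metis order_le_less less_irrefl)
next
  case False
  then have "f l > 0" using assms(3) by (cases "f l = 0") auto
  then have "f h < 0" using assms(3) by (simp add: mult_less_0_iff)
  then obtain x where "l \<le> x" "x \<le> h" "f x = 0" using IVT2'[of f h 0 l] \<open>f l > 0\<close> assms by auto
  then show ?thesis using \<open>f l > 0\<close> \<open>f h < 0\<close> by (metis order_le_less less_irrefl)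
qed

lemma sign_at_angle:
  assumes "\<rho> > 0" "\<rho>^2 = -(c*x+d)" "a*x+b = 2*\<rho>*cos (j*pi/n)" "1 \<le> j" "j < n"
  shows "(-1)^j * poly (W a b c d n) x > 0"
proof -
  define t where "t = j*pi/n"
  have n0: "real n > 0" using assms by simp
  have t0: "0 < t" "t < pi" unfolding t_def using assms n0 by (auto simp: field_simps)
  have st: "sin t > 0" using sin_gt_zero t0 by simp
  have a3: "a*x+b = 2*\<rho>*cos t" using assms(3) t_def by simp
  note tr = W_trig[OF assms(1,2) a3, of n]
  have nt: "real n * t = real j * pi" unfolding t_def using n0 by simp
  have s1: "sin (real n * t) = 0" unfolding nt by simp
  have "real (n + 1) * t = real j * pi + t" using nt by (simp add: algebra_simps)
  then have s2: "sin (real (n + 1) * t) = (-1)^j * sin t" by (simp add: sin_add)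
  have s3: "sin ((real n + 1) * t) = (-1)^j * sin t" using s2 by (simp add: add.commute)
  have "\<rho> * sin t * poly (W a b c d n) x = \<rho> * sin t * ((-1)^j * \<rho>^n)"
    using tr s1 s2 s3 by (simp add: algebra_simps)
  then have "poly (W a b c d n) x = (-1)^j * \<rho>^n" using st assms(1) by simp
  then show ?thesis using assms(1) by simp
qed



lemma cos_dec:
  assumes "i < j" "j \<le> n"
  shows "cos (real j * pi / real n) < cos (real i * pi / real n)"
proof -
  have n0: "real n > 0" using assms by simp
  show ?thesis
  proof (rule cos_monotone_0_pi)
    show "0 \<le> real i * pi / real n" using n0 by simp
    show "real i * pi / real n < real j * pi / real n" using assms n0 by (simp add: divide_strict_right_mono)
    show "real j * pi / real n \<le> pi" using assms n0 by (simp add: field_simps)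
  qed
qed

context setting
begin

definition "Fa n j x = a*x+b - 2*sqrt(-(c*x+d))*cos(real j*pi/real n)"

lemma Fa_cont: "continuous_on S (Fa n j)"
  unfolding Fa_def by (intro continuous_intros)

lemma Fa_step:
  assumes "x \<le> xp" "Fa n j x = 0" "Suc j \<le> n"
  shows "Fa n (Suc j) x > 0"
proof -
  have "c*x+d < 0" by (rule B_neg[OF assms(1)])
  then have "sqrt(-(c*x+d)) > 0" by simp
  moreover have "cos (real (Suc j)*pi/real n) < cos(real j*pi/real n)"
    using cos_dec[of j "Suc j" n] assms by simp
  ultimately have "2*sqrt(-(c*x+d))*cos(real (Suc j)*pi/real n) < 2*sqrt(-(c*x+d))*cos(real j*pi/real n)"
    by simp
  then show ?thesis using assms(2) unfolding Fa_def by simp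
qed

lemma Fa_sign:
  assumes "x \<le> xp" "Fa n j x = 0" "1 \<le> j" "j < n"
  shows "(-1)^j * poly (W a b c d n) x > 0"
proof -
  define \<rho> where "\<rho> = sqrt(-(c*x+d))"
  have "c*x+d < 0" by (rule B_neg[OF assms(1)])
  then have "\<rho> > 0" "\<rho>^2 = -(c*x+d)" unfolding \<rho>_def by simp_all
  moreover have "a*x+b = 2*\<rho>*cos (j*pi/n)" using assms(2) unfolding Fa_def \<rho>_def by simp
  ultimately show ?thesis using sign_at_angle assms(3,4) by blast
qed

lemma Fa_xm: "0 < j \<Longrightarrow> j < n \<Longrightarrow> Fa n j xm > 0"
proof -
  assume j: "0 < j" "j < n"
  have "cos (real j*pi/real n) < cos (real 0*pi/real n)" using cos_dec[of 0 j n] j by simp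
  then have "cos (real j*pi/real n) < 1" by simp
  then have "(a*xm+b) * cos (real j*pi/real n) < (a*xm+b)" using A_xm_pos by simp
  moreover have "Fa n j xm = (a*xm+b) - (a*xm+b)*cos(real j*pi/real n)"
    unfolding Fa_def sqrt_B_xm by (simp add: algebra_simps)
  ultimately show ?thesis by linarith
qed

lemma Fa_xp: "0 < j \<Longrightarrow> j < n \<Longrightarrow> Fa n j xp < 0"
proof -
  assume j: "0 < j" "j < n"
  have "cos (real n*pi/real n) < cos (real j*pi/real n)" using cos_dec[of j n n] j by simp
  then have "-1 < cos (real j*pi/real n)" using j by simp
  from mult_strict_left_mono_neg[OF this A_xp_neg]
  have "(a*xp+b) * cos (real j*pi/real n) < -(a*xp+b)" by simp
  moreover have "Fa n j xp = (a*xp+b) + (a*xp+b)*cos(real j*pi/real n)"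
    unfolding Fa_def sqrt_B_xp by (simp add: field_simps)
  ultimately show ?thesis by linarith
qed

lemma sqrt_B_xA: "sqrt(-(c*xA+d)) > 0"
  using B_neg[of xA] order_xs by simp

lemma Fa_xA_neg: "0 < j \<Longrightarrow> 2*j < n \<Longrightarrow> Fa n j xA < 0"
proof -
  assume j: "0 < j" "2*j < n"
  have n0: "real n > 0" using j by simp
  have "real j * pi / real n < pi/2" using j n0 by (simp add: field_simps)
  moreover have "0 \<le> real j * pi / real n" using n0 by simp
  then have "- (pi/2) < real j * pi / real n" using pi_gt_zero by linarith
  ultimately have "cos (real j*pi/real n) > 0" by (intro cos_gt_zero_pi)
  then show ?thesis unfolding Fa_def xA_eq using sqrt_B_xA by simp
qed

lemma Fa_xA_pos: "n < 2*j \<Longrightarrow> j < n \<Longrightarrow> Fa n j xA > 0"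
proof -
  assume j: "n < 2*j" "j < n"
  have n0: "real n > 0" using j by simp
  have "cos (real j*pi/real n) < cos (pi/2)"
  proof (rule cos_monotone_0_pi)
    show "0 \<le> pi/2" by simp
    show "pi/2 < real j * pi / real n" using j n0 by (simp add: field_simps)
    show "real j * pi / real n \<le> pi" using j n0 by (simp add: field_simps)
  qed
  then have "cos (real j*pi/real n) < 0" by simp
  then show ?thesis unfolding Fa_def xA_eq using sqrt_B_xA by (simp add: mult_pos_neg)
qed

lemma sign_xA:
  assumes "n \<ge> 1"
  shows "(-1)^((n+1) div 2) * poly (W a b c d n) xA > 0"
proof -
  define K where "K = (n+1) div 2"
  define \<rho> where "\<rho> = sqrt(-(c*xA+d))"
  have rp: "\<rho> > 0" unfolding \<rho>_def using sqrt_B_xA .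
  have r2: "\<rho>^2 = -(c*xA+d)" unfolding \<rho>_def using B_neg[of xA] order_xs by simp
  have cA: "a*xA+b = 2*\<rho>*cos (pi/2)" using xA_eq by simp
  note tr = W_trig[OF rp r2 cA, of n]
  have xAn: "xA < 0" using order_xs xp_neg by simp
  show ?thesis
  proof (cases "even n")
    case True
    then have n: "n = 2*K" unfolding K_def by auto
    have e1: "real (n+1) * (pi/2) = real K * pi + pi/2" using n by (simp add: field_simps)
    have e2: "real n * (pi/2) = real K * pi" using n by (simp add: field_simps)
    have s1: "sin (real (n+1) * (pi/2)) = (-1)^K" unfolding e1 by (simp add: sin_add)
    have s1': "sin ((real n + 1) * (pi/2)) = (-1)^K" using s1 by (simp add: add.commute)
    have s0: "sin (real n * (pi/2)) = 0" unfolding e2 by simp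
    have "\<rho> * poly (W a b c d n) x = \<rho> * ((-1)^K * \<rho>^n)" if "x = xA" for x
      using tr that s1 s1' s0 by (simp add: algebra_simps)
    then have "poly (W a b c d n) xA = (-1)^K * \<rho>^n" using rp by simp
    then show ?thesis unfolding K_def[symmetric] using rp by simp
  next
    case False
    then have n: "n + 1 = 2*K" unfolding K_def by auto
    have K1: "K \<ge> 1" using n by simp
    have e1: "real (n+1) * (pi/2) = real K * pi" using n by (simp add: field_simps)
    have e2: "real n * (pi/2) = real K * pi - pi/2" using n
      by (metis add_diff_cancel_right' e1 of_nat_add of_nat_1 left_diff_distrib mult_1)
    have "\<rho> * poly (W a b c d n) xA = xA * \<rho>^n * (- ((-1)^K))"
    proof -
      have s1: "sin (real (n+1) * (pi/2)) = 0" unfolding e1 by simp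
      have s1': "sin ((real n + 1) * (pi/2)) = 0" using s1 by (simp add: add.commute)
      have s0: "sin (real n * (pi/2)) = - ((-1)^K)" unfolding e2 by (simp add: sin_diff)
      have ab: "a*xA+b = 0" by (rule xA_eq)
      show ?thesis using tr[unfolded ab] s1 s1' s0 by (simp add: algebra_simps)
    qed
    then have eq: "\<rho> * poly (W a b c d n) xA = xA * \<rho>^n * (- ((-1)^K))" .
    have m1: "((-1::real)^K)^2 = 1" by (simp add: power_mult[symmetric])
    have "\<rho> * ((-1)^K * poly (W a b c d n) xA) = (-1)^K * (\<rho> * poly (W a b c d n) xA)"
      by (simp add: algebra_simps)
    also have "\<dots> = (-xA) * \<rho>^n * ((-1)^K)^2" unfolding eq by (simp add: algebra_simps power2_eq_square)
    also have "\<dots> = (-xA) * \<rho>^n" unfolding m1 by simp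
    finally have "\<rho> * ((-1)^K * poly (W a b c d n) xA) = (-xA) * \<rho>^n" .
    moreover have "(-xA) * \<rho>^n > 0" using xAn rp by (intro mult_pos_pos) simp_all
    ultimately have "\<rho> * ((-1)^K * poly (W a b c d n) xA) > 0" by simp
    then show ?thesis unfolding K_def[symmetric] using rp by (simp add: zero_less_mult_iff)
  qed
qed

end


lemma sgn_prod: "((-1::real)^j * x) * ((-1)^(Suc j) * y) = -(x*y)"
proof -
  have "(-1::real)^j * (-1)^j = (-1)^(j+j)" by (simp add: power_add)
  also have "\<dots> = 1" by simp
  finally have e: "(-1::real)^j * (-1)^j = 1" .
  have "((-1::real)^j * x) * ((-1)^(Suc j) * y) = - (((-1)^j * (-1)^j) * (x*y))" by (simp add: algebra_simps)
  then show ?thesis unfolding e by simp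
qed

context setting
begin

lemma card_img_inter:
  assumes "inj_on R I"
  shows "card (R ` I \<inter> J) = card {j\<in>I. R j \<in> J}"
proof -
  have "R ` I \<inter> J = R ` {j\<in>I. R j \<in> J}" by auto
  moreover have "inj_on R {j\<in>I. R j \<in> J}" using assms by (rule inj_on_subset) auto
  ultimately show ?thesis by (simp add: card_image)
qed

lemma main_n2:
  assumes n2: "n \<ge> 2"
  defines "K \<equiv> (n+1) div 2"
  shows "real_rooted (W a b c d n)
    \<and> nroots_in (W a b c d n) {xm<..<xA} = (n - 1) div 2
    \<and> nroots_in (W a b c d n) ({xA<..<xp} \<union> {xp..<gm}) = n div 2
    \<and> nroots_in (W a b c d n) {gp..0} = 1
    \<and> nroots_in (W a b c d n) {xp..<gm} = (if (a*xp+b) + n*((2-a)*xp-b) \<ge> 0 then 1 else 0)"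
proof -
  have K1: "1 \<le> K" "K < n" "2*K \<le> n+1" "n \<le> 2*K" using n2 unfolding K_def by auto
  obtain pL where pL: "\<forall>k<K-1. xm < pL k \<and> pL k < xA \<and> Fa n (Suc k) (pL k) = 0 \<and> (Suc k < K-1 \<longrightarrow> pL k < pL (Suc k))"
  proof -
    have "\<exists>p. \<forall>k<K-1. xm < p k \<and> p k < xA \<and> (\<lambda>k. Fa n (Suc k)) k (p k) = 0 \<and> (Suc k < K-1 \<longrightarrow> p k < p (Suc k))"
    proof (rule seq_pts[where M = "K-1"])
      show "xm < xA" using order_xs by simp
      show "continuous_on {xm..xA} (Fa n (Suc k))" for k by (rule Fa_cont)
      show "Fa n (Suc k) xm > 0" if "k < K-1" for k using that K1 by (intro Fa_xm) auto
      show "Fa n (Suc k) xA < 0" if "k < K-1" for k using that K1 by (intro Fa_xA_neg) auto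
      show "Fa n (Suc (Suc k)) x > 0" if "Suc k < K-1" "xm \<le> x" "x \<le> xA" "Fa n (Suc k) x = 0" for k x
        using that K1 order_xs by (intro Fa_step) auto
    qed simp
    then show ?thesis using that by auto
  qed
  obtain pR where pR: "\<forall>k<n-1-K. xA < pR k \<and> pR k < xp \<and> Fa n (K+1+k) (pR k) = 0 \<and> (Suc k < n-1-K \<longrightarrow> pR k < pR (Suc k))"
  proof -
    have "\<exists>p. \<forall>k<n-1-K. xA < p k \<and> p k < xp \<and> (\<lambda>k. Fa n (K+1+k)) k (p k) = 0 \<and> (Suc k < n-1-K \<longrightarrow> p k < p (Suc k))"
    proof (rule seq_pts[where M = "n-1-K"])
      show "xA < xp" using order_xs by simp
      show "continuous_on {xA..xp} (Fa n (K+1+k))" for k by (rule Fa_cont)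
      show "Fa n (K+1+k) xA > 0" if "k < n-1-K" for k using that K1 by (intro Fa_xA_pos) auto
      show "Fa n (K+1+k) xp < 0" if "k < n-1-K" for k using that K1 by (intro Fa_xp) auto
      show "Fa n (K+1+Suc k) x > 0" if "Suc k < n-1-K" "xA \<le> x" "x \<le> xp" "Fa n (K+1+k) x = 0" for k x
        using that K1 Fa_step[of x n "K+1+k"] by auto
    qed simp
    then show ?thesis using that by auto
  qed
  define P where "P j = (if j < K then pL (j-1) else if j = K then xA else if j < n then pR (j-K-1) else gm)" for j
  have PK: "P K = xA" unfolding P_def by simp
  have Pn: "P n = gm" unfolding P_def using K1 by simp
  have PL: "xm < P j \<and> P j < xA \<and> Fa n j (P j) = 0" if "1 \<le> j" "j < K" for j
  proof -
    have jj: "j - 1 < K - 1" "Suc (j-1) = j" using that by auto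
    have "xm < pL (j-1) \<and> pL (j-1) < xA \<and> Fa n (Suc (j-1)) (pL (j-1)) = 0" using pL jj(1) by blast
    moreover have "P j = pL (j-1)" using that unfolding P_def by simp
    ultimately show ?thesis using jj(2) by simp
  qed
  have PR: "xA < P j \<and> P j < xp \<and> Fa n j (P j) = 0" if "K < j" "j < n" for j
  proof -
    have jj: "j - K - 1 < n - 1 - K" "K + 1 + (j - K - 1) = j" using that by auto
    have "xA < pR (j-K-1) \<and> pR (j-K-1) < xp \<and> Fa n (K+1+(j-K-1)) (pR (j-K-1)) = 0" using pR jj(1) by blast
    moreover have "P j = pR (j-K-1)" using that unfolding P_def by simp
    ultimately show ?thesis using jj(2) by simp
  qed
  have xAxp: "xA < xp" "xp \<le> gm" "gm \<le> gp" "gp < 0" "xm < xA"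
    using order_xs xp_le_gm gm_le_gp gp_neg by auto
  have gmn: "(-1)^n * gm^n > 0"
  proof -
    have "(-1)^n * gm^n = (-gm)^n" by (metis power_mult_distrib mult_minus1)
    then show ?thesis using xAxp by simp
  qed
  have gpn: "(-1)^n * gp^n > 0"
  proof -
    have "(-1)^n * gp^n = (-gp)^n" by (metis power_mult_distrib mult_minus1)
    then show ?thesis using xAxp by simp
  qed
  have Wgm: "poly (W a b c d n) gm = gm^n" using W_g_root G_gm by simp
  have Wgp: "poly (W a b c d n) gp = gp^n" using W_g_root G_gp by simp
  have sgn: "(-1)^j * poly (W a b c d n) (P j) > 0" if j1: "1 \<le> j" "j \<le> n" for j
  proof -
    have "j < K \<or> j = K \<or> (K < j \<and> j < n) \<or> j = n" using j1 by linarith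
    then consider "j < K" | "j = K" | "K < j" "j < n" | "j = n" by blast
    then show ?thesis
    proof cases
      case 1 then show ?thesis using PL[OF j1(1) 1] xAxp K1 j1 by (intro Fa_sign) auto
    next
      case 2 then show ?thesis using sign_xA PK n2 unfolding K_def by simp
    next
      case 3 then show ?thesis using PR[OF 3] xAxp K1 j1 by (intro Fa_sign) auto
    next
      case 4 then show ?thesis using Pn Wgm gmn by simp
    qed
  qed
  have Pstep: "P j < P (Suc j)" if "1 \<le> j" "j < n" for j
  proof -
    have "Suc j < K \<or> Suc j = K \<or> j = K \<or> (K < j \<and> Suc j < n) \<or> (K < j \<and> Suc j = n)" using that by linarith
    then consider "Suc j < K" | "Suc j = K" | "j = K" | "K < j" "Suc j < n" | "K < j" "Suc j = n" by blast
    then show ?thesis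
    proof cases
      case 1
      have "j - 1 < K - 1" "Suc (j - 1) < K - 1" "Suc (j-1) = j" using 1 that by auto
      then have "pL (j-1) < pL j" using pL by metis
      then show ?thesis using 1 unfolding P_def by simp
    next
      case 2 then show ?thesis using PL[of j] that PK by simp
    next
      case 3
      show ?thesis
      proof (cases "Suc j < n")
        case True then show ?thesis using PR[of "Suc j"] 3 PK by simp
      next
        case False then have "Suc j = n" using that by simp
        then show ?thesis using Pn PK 3 xAxp by simp
      qed
    next
      case 4
      have "j - K - 1 < n - 1 - K" "Suc (j - K - 1) < n - 1 - K" "Suc (j-K-1) = Suc j - K - 1" using 4 by auto
      then have "pR (j-K-1) < pR (Suc j - K - 1)" using pR by metis
      then show ?thesis using 4 unfolding P_def by simp
    next
      case 5 then show ?thesis using PR[of j] Pn xAxp by simp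
    qed
  qed
  have Pmono: "P i \<le> P j" if "1 \<le> i" "i \<le> j" "j \<le> n" for i j
    using that(2,3)
  proof (induction j rule: dec_induct)
    case base then show ?case by simp
  next
    case (step j) then show ?case using Pstep[of j] that(1) by force
  qed
  have cont: "continuous_on S (\<lambda>x. poly (W a b c d n) x)" for S by (intro continuous_intros)
  have "\<forall>j\<in>{1..<n}. \<exists>r. P j < r \<and> r < P (Suc j) \<and> poly (W a b c d n) r = 0"
  proof
    fix j assume j: "j \<in> {1..<n}"
    have s1: "(-1)^j * poly (W a b c d n) (P j) > 0" using sgn j by auto
    have jj: "1 \<le> Suc j" "Suc j \<le> n" using j by auto
    from sgn[OF jj] have s2: "(-1)^(Suc j) * poly (W a b c d n) (P (Suc j)) > 0" .
    have "((-1)^j * poly (W a b c d n) (P j)) * ((-1)^(Suc j) * poly (W a b c d n) (P (Suc j))) > 0"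
      by (rule mult_pos_pos[OF s1 s2])
    then have "poly (W a b c d n) (P j) * poly (W a b c d n) (P (Suc j)) < 0"
      unfolding sgn_prod by simp
    then show "\<exists>r. P j < r \<and> r < P (Suc j) \<and> poly (W a b c d n) r = 0"
      using sign_change_root[OF Pstep cont] j by auto
  qed
  then obtain r where r: "\<forall>j\<in>{1..<n}. P j < r j \<and> r j < P (Suc j) \<and> poly (W a b c d n) (r j) = 0"
    by (metis bchoice)
  obtain r0 where r0: "gp < r0" "r0 < 0" "poly (W a b c d n) r0 = 0"
  proof -
    have z: "(-1)^(Suc n) * poly (W a b c d n) 0 > 0" using W_zero_sign[OF b d _ n2] b_sq_4d by simp
    have g: "(-1)^n * poly (W a b c d n) gp > 0" using Wgp gpn by simp
    have "((-1)^n * poly (W a b c d n) gp) * ((-1)^(Suc n) * poly (W a b c d n) 0) > 0"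
      by (rule mult_pos_pos[OF g z])
    then have "poly (W a b c d n) gp * poly (W a b c d n) 0 < 0" unfolding sgn_prod by simp
    then show ?thesis using sign_change_root[OF xAxp(4) cont] that by auto
  qed
  define R where "R j = (if j = n then r0 else r j)" for j
  have Rin: "P j < R j \<and> R j < P (Suc j) \<and> poly (W a b c d n) (R j) = 0" if "1 \<le> j" "j < n" for j
    using r that unfolding R_def by auto
  have Rn: "R n = r0" unfolding R_def by simp
  have Rlt: "R i < R j" if "1 \<le> i" "i < j" "j \<le> n" for i j
  proof -
    have "R i < P (Suc i)" using Rin[of i] that by simp
    also have "P (Suc i) \<le> P j" using Pmono that by simp
    also have "P j < R j"
    proof (cases "j = n")
      case True then show ?thesis using Pn Rn r0 xAxp by simp
    next
      case False then show ?thesis using Rin[of j] that by simp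
    qed
    finally show ?thesis .
  qed
  have inj: "inj_on R {1..n}"
  proof (rule inj_onI)
    fix i j assume ij: "i \<in> {1..n}" "j \<in> {1..n}" "R i = R j"
    show "i = j"
    proof (rule ccontr)
      assume "i \<noteq> j"
      then have "i < j \<or> j < i" by linarith
      then show False
      proof
        assume ilj: "i < j"
        have "R i < R j" by (rule Rlt) (use ij ilj in auto)
        then show False using ij(3) by simp
      next
        assume jli: "j < i"
        have "R j < R i" by (rule Rlt) (use ij jli in auto)
        then show False using ij(3) by simp
      qed
    qed
  qed
  define S where "S = R ` {1..n}"
  have cardS: "card S = n" unfolding S_def using inj by (simp add: card_image)
  have Sroot: "\<forall>x\<in>S. poly (W a b c d n) x = 0"
  proof
    fix x assume "x \<in> S"
    then obtain j where j: "j \<in> {1..n}" "x = R j" unfolding S_def by auto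
    show "poly (W a b c d n) x = 0"
    proof (cases "j = n")
      case True then show ?thesis using j Rn r0 by simp
    next
      case False then show ?thesis using j Rin[of j] by simp
    qed
  qed
  have degW: "degree (W a b c d n) = n" "W a b c d n \<noteq> 0" using W_degree[of a] a by auto
  have finS: "finite S" unfolding S_def by simp
  have cardS': "card S = degree (W a b c d n)" using cardS degW(1) by simp
  have cnt: "nroots_in (W a b c d n) J = card {j\<in>{1..n}. R j \<in> J}" for J
  proof -
    have "nroots_in (W a b c d n) J = card (S \<inter> J)" by (rule nroots_in_distinct[OF degW(2) finS cardS' Sroot])
    also have "\<dots> = card {j\<in>{1..n}. R j \<in> J}" unfolding S_def by (rule card_img_inter[OF inj])
    finally show ?thesis .
  qed
  have allroots: "{x. poly (W a b c d n) x = 0} = S"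
    using distinct_roots_full(1)[OF degW(2) finS cardS' Sroot] .
  have rr: "real_rooted (W a b c d n)"
    using distinct_roots_full(3)[OF degW(2) finS cardS' Sroot] .
  have locL: "xm < R j \<and> R j < xA" if j1: "1 \<le> j" "j < K" for j
  proof -
    have a1: "xm < P j" using PL[OF j1] by blast
    have jn: "j < n" using j1 K1 by linarith
    have a2: "P j < R j" "R j < P (Suc j)" using Rin[OF j1(1) jn] by blast+
    have sj: "1 \<le> Suc j" "Suc j \<le> K" "K \<le> n" using j1 K1 by linarith+
    have a3: "P (Suc j) \<le> P K" by (rule Pmono[OF sj])
    show ?thesis using a1 a2 a3 PK by linarith
  qed
  have locM: "xA < R j \<and> R j < gm" if j1: "K \<le> j" "j < n" for j
  proof -
    have kk: "1 \<le> K" "K \<le> j" "j \<le> n" using j1 K1 by linarith+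
    have a1: "P K \<le> P j" by (rule Pmono[OF kk])
    have j0: "1 \<le> j" using j1 K1 by linarith
    have a2: "P j < R j" "R j < P (Suc j)" using Rin[OF j0 j1(2)] by blast+
    have sj: "1 \<le> Suc j" "Suc j \<le> n" "n \<le> n" using j1 by linarith+
    have a3: "P (Suc j) \<le> P n" by (rule Pmono[OF sj])
    show ?thesis using a1 a2 a3 PK Pn by linarith
  qed
  have locN: "gp < R n \<and> R n < 0" using Rn r0 by simp
  have Pn1: "P (n-1) < xp"
  proof (cases "n - 1 = K")
    case True then show ?thesis using PK xAxp by simp
  next
    case False
    then have "K < n - 1" "n - 1 < n" using K1 by linarith+
    from PR[OF this] show ?thesis by blast
  qed
  have locLow: "R j < xp" if j1: "1 \<le> j" "j < n - 1" for j
  proof -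
    have jn: "j < n" using j1 by linarith
    have a2: "R j < P (Suc j)" using Rin[OF j1(1) jn] by blast
    have sj: "1 \<le> Suc j" "Suc j \<le> n - 1" "n - 1 \<le> n" using j1 by linarith+
    have a3: "P (Suc j) \<le> P (n-1)" by (rule Pmono[OF sj])
    show ?thesis using a2 a3 Pn1 by linarith
  qed
  have c1: "{j\<in>{1..n}. R j \<in> {xm<..<xA}} = {1..<K}"
  proof (intro set_eqI iffI)
    fix j assume j: "j \<in> {j\<in>{1..n}. R j \<in> {xm<..<xA}}"
    show "j \<in> {1..<K}"
    proof (rule ccontr)
      assume "j \<notin> {1..<K}"
      then have "K \<le> j" using j by auto
      then show False using j locM locN xAxp by (cases "j = n") force+
    qed
  next
    fix j assume "j \<in> {1..<K}"
    then show "j \<in> {j\<in>{1..n}. R j \<in> {xm<..<xA}}" using locL K1 by auto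
  qed
  have c2: "{j\<in>{1..n}. R j \<in> {xA<..<xp} \<union> {xp..<gm}} = {K..<n}"
  proof -
    have e: "{xA<..<xp} \<union> {xp..<gm} = {xA<..<gm}" using xAxp by auto
    show ?thesis unfolding e
    proof (intro set_eqI iffI)
      fix j assume j: "j \<in> {j\<in>{1..n}. R j \<in> {xA<..<gm}}"
      show "j \<in> {K..<n}"
      proof (rule ccontr)
        assume "j \<notin> {K..<n}"
        then have "j < K \<or> j = n" using j by auto
        then show False
        proof
          assume jk: "j < K"
          have "1 \<le> j" using j by simp
          from locL[OF this jk] show False using j by simp
        next
          assume "j = n" then show False using j locN xAxp by simp
        qed
      qed
    next
      fix j assume "j \<in> {K..<n}"
      then show "j \<in> {j\<in>{1..n}. R j \<in> {xA<..<gm}}" using locM K1 by auto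
    qed
  qed
  have c4: "{j\<in>{1..n}. R j \<in> {gp..0}} = {n}"
  proof (intro set_eqI iffI)
    fix j assume j: "j \<in> {j\<in>{1..n}. R j \<in> {gp..0}}"
    show "j \<in> {n}"
    proof (rule ccontr)
      assume "j \<notin> {n}"
      then have "j < K \<or> (K \<le> j \<and> j < n)" using j by auto
      then show False using j locL locM xAxp by force
    qed
  next
    fix j assume "j \<in> {n}"
    then show "j \<in> {j\<in>{1..n}. R j \<in> {gp..0}}" using locN n2 by auto
  qed
  have c3: "{j\<in>{1..n}. R j \<in> {xp..<gm}} = (if xp \<le> R (n-1) then {n-1} else {})"
  proof (intro set_eqI iffI)
    fix j assume j: "j \<in> {j\<in>{1..n}. R j \<in> {xp..<gm}}"
    have "j = n - 1"
    proof (rule ccontr)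
      assume "j \<noteq> n - 1"
      then have "j < n - 1 \<or> j = n" using j by auto
      then show False
      proof
        assume jk: "j < n - 1"
        have "1 \<le> j" using j by simp
        from locLow[OF this jk] show False using j by simp
      next
        assume "j = n" then show False using j locN xAxp by simp
      qed
    qed
    then show "j \<in> (if xp \<le> R (n-1) then {n-1} else {})" using j by auto
  next
    fix j assume j: "j \<in> (if xp \<le> R (n-1) then {n-1} else {})"
    then have "j = n - 1" "xp \<le> R (n-1)" by (auto split: if_splits)
    moreover have "R (n-1) < gm" using locM[of "n-1"] K1 by simp
    ultimately show "j \<in> {j\<in>{1..n}. R j \<in> {xp..<gm}}" using n2 by auto
  qed
  define Ap where "Ap = (a*xp+b) + n*((2-a)*xp-b)"
  define u where "u = (a*xp+b)/2"
  have u0: "u < 0" unfolding u_def using A_xp_neg by simp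
  have dbl: "2*u * poly (W a b c d n) xp = u^n * Ap"
  proof -
    have h1: "a*xp+b = 2*u" unfolding u_def by simp
    have h2: "c*xp+d = - (u^2)" unfolding u_def using Delta_xp by (simp add: power_divide)
    have "2*u + real n*(2*xp - 2*u) = Ap" unfolding Ap_def u_def by (simp add: field_simps)
    then show ?thesis using W_double[OF h1 h2, of n] by simp
  qed
  have sxp: "(-1)^n * poly (W a b c d n) xp > 0 \<longleftrightarrow> Ap < 0"
  proof -
    define V where "V = (-1)^n * poly (W a b c d n) xp"
    have pm: "(-u)^n = (-1)^n * u^n" by (metis power_mult_distrib mult_minus1)
    have "2*u * V = (-1)^n * (2*u * poly (W a b c d n) xp)" unfolding V_def by (simp only: mult_ac)
    also have "\<dots> = ((-1)^n * u^n) * Ap" unfolding dbl by (simp only: mult_ac)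
    finally have e: "(2*u) * V = (-u)^n * Ap" unfolding pm .
    have up: "(-u)^n > 0" using u0 by simp
    have u2: "2*u < 0" using u0 by simp
    show ?thesis unfolding V_def[symmetric]
    proof
      assume "V > 0"
      then have "(2*u) * V < 0" using u2 by (simp add: mult_neg_pos)
      then have "(-u)^n * Ap < 0" using e by simp
      show "Ap < 0"
      proof (rule ccontr)
        assume "\<not> Ap < 0" then have "Ap \<ge> 0" by simp
        from mult_nonneg_nonneg[OF less_imp_le[OF up] this] show False using \<open>(-u)^n * Ap < 0\<close> by simp
      qed
    next
      assume "Ap < 0"
      then have "(-u)^n * Ap < 0" using up by (simp add: mult_pos_neg)
      then have "(2*u) * V < 0" using e by simp
      then show "V > 0" using u2 by (simp add: mult_less_0_iff)
    qed
  qed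
  have sPn1: "(-1)^(n-1) * poly (W a b c d n) (P (n-1)) > 0" using sgn[of "n-1"] K1 by simp
  have which: "R (n-1) = y" if "y \<in> {P (n-1)<..<gm}" "poly (W a b c d n) y = 0" for y
  proof -
    have "y \<in> S" using allroots that by auto
    then obtain j where j: "j \<in> {1..n}" "R j = y" unfolding S_def by auto
    have "j = n - 1"
    proof (rule ccontr)
      assume "j \<noteq> n - 1"
      then have "j < n - 1 \<or> j = n" using j by auto
      then show False
      proof
        assume jl: "j < n - 1"
        have "R j < P (Suc j)" using Rin[of j] j jl by simp
        also have "P (Suc j) \<le> P (n-1)" using Pmono[of "Suc j" "n-1"] j jl by simp
        finally show False using that j by simp
      next
        assume "j = n" then show False using j that locN xAxp by simp
      qed
    qed
    then show ?thesis using j by simp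
  qed
  have dec: "xp \<le> R (n-1) \<longleftrightarrow> Ap \<ge> 0"
  proof (cases "Ap < 0")
    case True
    then have "(-1)^n * poly (W a b c d n) xp > 0" using sxp by simp
    have sx: "(-1)^(Suc (n-1)) * poly (W a b c d n) xp > 0" using \<open>(-1)^n * poly (W a b c d n) xp > 0\<close> n2 by simp
    have "((-1)^(n-1) * poly (W a b c d n) (P (n-1))) * ((-1)^(Suc (n-1)) * poly (W a b c d n) xp) > 0"
      by (rule mult_pos_pos[OF sPn1 sx])
    then have "poly (W a b c d n) (P (n-1)) * poly (W a b c d n) xp < 0"
      unfolding sgn_prod by simp
    then obtain y where y: "P (n-1) < y" "y < xp" "poly (W a b c d n) y = 0"
      using sign_change_root[OF Pn1 cont] by auto
    then have "R (n-1) = y" using which xAxp by auto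
    then show ?thesis using y True by simp
  next
    case False
    then have np: "\<not> (-1)^n * poly (W a b c d n) xp > 0" using sxp by simp
    have xg: "xp < gm"
    proof (rule ccontr)
      assume "\<not> xp < gm" then have "xp = gm" using xAxp by simp
      then show False using np Wgm gmn by simp
    qed
    obtain y where y: "xp \<le> y" "y < gm" "poly (W a b c d n) y = 0"
    proof (cases "poly (W a b c d n) xp = 0")
      case True then show ?thesis using that xg by auto
    next
      case False
      then have "(-1)^n * poly (W a b c d n) xp < 0" using np by (simp add: not_less le_less)
      then have "((-1)^n * poly (W a b c d n) xp) * ((-1)^n * poly (W a b c d n) gm) < 0"
        using Wgm gmn by (simp add: mult_neg_pos)
      then have "poly (W a b c d n) xp * poly (W a b c d n) gm < 0"
        by (simp add: algebra_simps power_mult_distrib[symmetric])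
      then obtain y where "xp < y" "y < gm" "poly (W a b c d n) y = 0"
        using sign_change_root[OF xg cont] by auto
      then show ?thesis by (intro that[of y]) auto
    qed
    then have "R (n-1) = y" using which Pn1 by auto
    then show ?thesis using y False by simp
  qed
  show ?thesis
    unfolding cnt c1 c2 c3 c4
    using rr K1 dec unfolding Ap_def K_def by auto
qed

end


context setting
begin

lemma nplus_eq: "n_plus a b c d = -(a*xp+b)/((2-a)*xp-b)"
  unfolding n_plus_def Let_def xp_def by simp

lemma cond_equiv:
  assumes "n \<ge> 1"
  shows "((a*xp+b) + real n*((2-a)*xp-b) \<ge> 0) \<longleftrightarrow>
         (DeltaDelta a b c d > Delta_g a b c d \<and> real n \<ge> n_plus a b c d)"
proof -
  define A where "A = a*xp+b"
  define h where "h = (2-a)*xp-b"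
  have A0: "A < 0" unfolding A_def using A_xp_neg .
  have n1: "real n \<ge> 1" using assms by simp
  show ?thesis unfolding nplus_eq h_pos_iff[symmetric] A_def[symmetric] h_def[symmetric]
  proof
    assume H: "A + real n * h \<ge> 0"
    then have "real n * h > 0" using A0 by linarith
    then have hp: "h > 0" using n1 by (simp add: zero_less_mult_iff)
    have "-A \<le> real n * h" using H by linarith
    then have "-A/h \<le> real n" by (subst pos_divide_le_eq[OF hp]) (simp add: mult.commute)
    then show "0 < h \<and> - A / h \<le> real n" using hp by simp
  next
    assume H: "0 < h \<and> - A / h \<le> real n"
    then have "-A \<le> real n * h" using pos_divide_le_eq[of h "-A" "real n"] by (simp add: mult.commute)
    then show "A + real n * h \<ge> 0" by linarith
  qed
qed

lemma main_n1:
  shows "real_rooted (W a b c d 1)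
    \<and> nroots_in (W a b c d 1) {xm<..<xA} = 0
    \<and> nroots_in (W a b c d 1) ({xA<..<xp} \<union> {xp..<gm}) = 0
    \<and> nroots_in (W a b c d 1) {gp..0} = 1
    \<and> nroots_in (W a b c d 1) {xp..<gm} = 0
    \<and> \<not> (DeltaDelta a b c d > Delta_g a b c d \<and> real 1 \<ge> n_plus a b c d)"
proof -
  have W1: "W a b c d 1 = [:0,1:]" by simp
  have p0: "[:0,1::real:] \<noteq> 0" by simp
  have fin: "finite {0::real}" by simp
  have cd: "card {0::real} = degree [:0,1::real:]" by simp
  have rt: "\<forall>x\<in>{0::real}. poly [:0,1:] x = 0" by simp
  note cnt = nroots_in_distinct[OF p0 fin cd rt]
  have neg: "xA < 0" "xp < 0" "gm < 0" "gp < 0" using order_xs xp_neg xp_le_gm gm_le_gp gp_neg by auto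
  have i1: "{0::real} \<inter> {xm<..<xA} = {}" using neg by auto
  have i2: "{0::real} \<inter> ({xA<..<xp} \<union> {xp..<gm}) = {}" using neg by auto
  have i4: "{0::real} \<inter> {gp..0} = {0}" using neg by auto
  have i3: "{0::real} \<inter> {xp..<gm} = {}" using neg by auto
  have rr: "real_rooted [:0,1::real:]" using distinct_roots_full(3)[OF p0 fin cd rt] .
  have nc: "\<not> (DeltaDelta a b c d > Delta_g a b c d \<and> real 1 \<ge> n_plus a b c d)"
  proof
    assume "DeltaDelta a b c d > Delta_g a b c d \<and> real 1 \<ge> n_plus a b c d"
    then have "(a*xp+b) + real 1*((2-a)*xp-b) \<ge> 0" using cond_equiv[of 1] by simp
    moreover have "(a*xp+b) + real 1*((2-a)*xp-b) = 2*xp" by (simp add: algebra_simps)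
    ultimately show False using neg by simp
  qed
  show ?thesis unfolding W1 cnt i1 i2 i3 i4 using rr nc by simp
qed

end

theorem theorem3p2:
  fixes a b c d :: real and n :: nat
  assumes "a < 0" and "b < 0" and "d < 0" and "0 < c"
    and "c \<le> c_minus a b d"
    and "n \<ge> 1"
  shows "real_rooted (W a b c d n)
    \<and> nroots_in (W a b c d n) {xDelta_minus a b c d <..< x_A a b} = (n - 1) div 2
    \<and> nroots_in (W a b c d n)
        ({x_A a b <..< xDelta_plus a b c d} \<union> {xDelta_plus a b c d ..< xg_minus a b c d})
        = n div 2
    \<and> nroots_in (W a b c d n) {xg_plus a b c d .. 0} = 1
    \<and> nroots_in (W a b c d n) {xDelta_plus a b c d ..< xg_minus a b c d}
        = (if DeltaDelta a b c d > Delta_g a b c d \<and> real n \<ge> n_plus a b c d then 1 else 0)"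
proof -
  interpret S: setting a b c d using assms by unfold_locales
  have e: "xDelta_minus a b c d = S.xm" "x_A a b = S.xA" "xDelta_plus a b c d = S.xp"
    "xg_minus a b c d = S.gm" "xg_plus a b c d = S.gp"
    unfolding S.xm_def S.xA_def S.xp_def S.gm_def S.gp_def by simp_all
  show ?thesis
  proof (cases "n = 1")
    case True
    then show ?thesis unfolding e using S.main_n1 by simp
  next
    case False
    then have n2: "n \<ge> 2" using assms(6) by simp
    show ?thesis unfolding e using S.main_n2[OF n2] S.cond_equiv[OF assms(6)] by simp
  qed
qed


end
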